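(* Let $X(t)=\sum_{k=1}^{N(t)}X_k$ be a compound Poisson process with rate $\lambda>0$ and iid symmetric jumps $X_k$ that are not a.s. zero. Then $$\limsup_{u\to\infty}\frac{P(\sup_{0\le t\le1}X(t)>u)}{P(X(1)>u)}<2.$$ *)

theory Defs
  imports "HOL-Probability.Probability"
begin

text \<open>Poisson counting process built from inter-arrival times E 0, E 1, ...:
  the n-th arrival time is E 0 + ... + E (n-1), and N(t) counts arrivals in [0,t].\<close>
definition poisson_count :: "(nat \<Rightarrow> 'a \<Rightarrow> real) \<Rightarrow> real \<Rightarrow> 'a \<Rightarrow> nat" where
  "poisson_count E t \<omega> = card {n::nat. 1 \<le> n \<and> (\<Sum>i<n. E i \<omega>) \<le> t}"

definition compound_poisson :: "(nat \<Rightarrow> 'a \<Rightarrow> real) \<Rightarrow> (nat \<Rightarrow> 'a \<Rightarrow> real) \<Rightarrow> real \<Rightarrow> 'a \<Rightarrow> real" where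
  "compound_poisson Y E t \<omega> = (\<Sum>k < poisson_count E t \<omega>. Y k \<omega>)"

end

theory Submission
  imports Defs
begin

lemma measurable_card_Collect:
  fixes P :: "nat \<Rightarrow> 'a \<Rightarrow> bool"
  assumes [measurable]: "\<And>n. Measurable.pred \<Omega> (P n)"
  shows "(\<lambda>\<omega>. card {n. P n \<omega>}) \<in> measurable \<Omega> (count_space UNIV)"
proof -
  have eq: "{\<omega>\<in>space \<Omega>. card {n. P n \<omega>} = m} =
     (\<Union>F\<in>{F. finite F \<and> card F = m}. {\<omega>\<in>space \<Omega>. \<forall>n. P n \<omega> \<longleftrightarrow> n \<in> F}) \<union>
     (if m = 0 then {\<omega>\<in>space \<Omega>. \<forall>K. \<exists>n\<ge>K. P n \<omega>} else {})" for m
  proof (intro set_eqI iffI)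
    fix \<omega> assume a: "\<omega> \<in> {\<omega>\<in>space \<Omega>. card {n. P n \<omega>} = m}"
    show "\<omega> \<in> (\<Union>F\<in>{F. finite F \<and> card F = m}. {\<omega>\<in>space \<Omega>. \<forall>n. P n \<omega> \<longleftrightarrow> n \<in> F}) \<union>
     (if m = 0 then {\<omega>\<in>space \<Omega>. \<forall>K. \<exists>n\<ge>K. P n \<omega>} else {})"
    proof (cases "finite {n. P n \<omega>}")
      case True then show ?thesis using a by (intro UnI1 UN_I[of "{n. P n \<omega>}"]) auto
    next
      case False then show ?thesis using a by (auto simp: infinite_nat_iff_unbounded_le)
    qed
  next
    fix \<omega> assume "\<omega> \<in> (\<Union>F\<in>{F. finite F \<and> card F = m}. {\<omega>\<in>space \<Omega>. \<forall>n. P n \<omega> \<longleftrightarrow> n \<in> F}) \<union>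
     (if m = 0 then {\<omega>\<in>space \<Omega>. \<forall>K. \<exists>n\<ge>K. P n \<omega>} else {})"
    then show "\<omega> \<in> {\<omega>\<in>space \<Omega>. card {n. P n \<omega>} = m}"
    proof
      assume "\<omega> \<in> (\<Union>F\<in>{F. finite F \<and> card F = m}. {\<omega>\<in>space \<Omega>. \<forall>n. P n \<omega> \<longleftrightarrow> n \<in> F})"
      then obtain F where "finite F" "card F = m" "\<omega> \<in> space \<Omega>" "\<forall>n. P n \<omega> \<longleftrightarrow> n \<in> F" by auto
      moreover then have "{n. P n \<omega>} = F" by auto
      ultimately show ?thesis by auto
    next
      assume "\<omega> \<in> (if m = 0 then {\<omega>\<in>space \<Omega>. \<forall>K. \<exists>n\<ge>K. P n \<omega>} else {})"
      then show ?thesis using infinite_nat_iff_unbounded_le[of "{n. P n \<omega>}"] by (auto split: if_splits)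
    qed
  qed
  have cnt: "countable {F::nat set. finite F \<and> card F = m}" for m
    by (rule countable_subset[OF _ countable_Collect_finite]) auto
  show ?thesis
    unfolding measurable_count_space_eq2_countable
  proof (intro conjI ballI)
    fix m :: nat
    have "{\<omega>\<in>space \<Omega>. card {n. P n \<omega>} = m} \<in> sets \<Omega>"
      unfolding eq
      by (intro sets.Un sets.countable_UN'' cnt) (auto)
    moreover have "(\<lambda>\<omega>. card {n. P n \<omega>}) -` {m} \<inter> space \<Omega> = {\<omega>\<in>space \<Omega>. card {n. P n \<omega>} = m}" by auto
    ultimately show "(\<lambda>\<omega>. card {n. P n \<omega>}) -` {m} \<inter> space \<Omega> \<in> sets \<Omega>" by simp
  qed auto
qed

lemma measurable_poisson_count[measurable]:
  assumes [measurable]: "\<And>i. E i \<in> borel_measurable \<Omega>"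
  shows "poisson_count E t \<in> measurable \<Omega> (count_space UNIV)"
  unfolding poisson_count_def[abs_def]
  by (rule measurable_card_Collect) measurable


lemma comp_meas_any[measurable]: "(\<lambda>g. g i) \<in> borel_measurable (PiM I (\<lambda>_. (borel :: real measure)))"
proof (cases "i \<in> I")
  case True then show ?thesis by (rule measurable_component_singleton)
next
  case False
  have "(\<lambda>g. g i) \<in> borel_measurable (PiM I (\<lambda>_. (borel :: real measure))) \<longleftrightarrow>
        (\<lambda>_. undefined::real) \<in> borel_measurable (PiM I (\<lambda>_. (borel :: real measure)))"
    by (rule measurable_cong) (use False in \<open>auto simp: space_PiM PiE_def extensional_def\<close>)
  then show ?thesis by simp
qed

lemma (in prob_space) prob_le_null:
  assumes "X \<subseteq> Y \<union> Z" "Y \<in> events" "Z \<in> events" "prob Z = 0"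
  shows "prob X \<le> prob Y"
proof -
  have "prob X \<le> prob (Y \<union> Z)" using assms by (intro finite_measure_mono) auto
  also have "\<dots> \<le> prob Y + prob Z" using assms by (intro measure_Un_le) auto
  finally show ?thesis using assms by simp
qed

lemma (in prob_space) prob_eq_null:
  assumes "X \<in> events" "Y \<in> events" "Z \<in> events" "prob Z = 0"
    and "\<And>\<omega>. \<omega> \<in> space M \<Longrightarrow> \<omega> \<notin> Z \<Longrightarrow> \<omega> \<in> X \<longleftrightarrow> \<omega> \<in> Y"
  shows "prob X = prob Y"
proof (rule antisym)
  show "prob X \<le> prob Y" using assms sets.sets_into_space[OF assms(1)]
    by (intro prob_le_null[where Z=Z]) auto
  show "prob Y \<le> prob X" using assms sets.sets_into_space[OF assms(2)]
    by (intro prob_le_null[where Z=Z]) auto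
qed

locale cp_setting = prob_space M for M :: "'a measure" +
  fixes Y E :: "nat \<Rightarrow> 'a \<Rightarrow> real" and lam :: real
  assumes lam: "lam > 0"
    and indep: "indep_vars (\<lambda>_. borel) (case_sum Y E) UNIV"
    and expo: "\<And>i. distributed M lborel (E i) (exponential_density lam)"
    and rvY[measurable]: "\<And>k. Y k \<in> borel_measurable M"
    and ident: "\<And>k. distr M borel (Y k) = distr M borel (Y 0)"
    and symm: "distr M borel (\<lambda>\<omega>. - Y 0 \<omega>) = distr M borel (Y 0)"
begin

lemma rvE[measurable]: "E i \<in> borel_measurable M"
  using expo[of i] by (auto dest: distributed_measurable)

lemma probE_le1: "prob {\<omega>\<in>space M. E k \<omega> \<le> 1} = 1 - exp (- lam)"
  using exponential_distributedD_le[OF expo[of k] _ lam, of 1] by simp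

lemma probE_le0: "prob {\<omega>\<in>space M. E k \<omega> \<le> 0} = 0"
  using exponential_distributedD_le[OF expo[of k] _ lam, of 0] by simp

lemma L:
  fixes k :: nat
  assumes W: "W \<in> sets (PiM (Inl ` {..<k} \<union> Inr ` {..<k}) (\<lambda>_. borel))"
  shows "prob {\<omega>\<in>space M. restrict (\<lambda>j. case_sum Y E j \<omega>) (Inl ` {..<k} \<union> Inr ` {..<k}) \<in> W \<and> E k \<omega> \<le> 1}
     = prob {\<omega>\<in>space M. restrict (\<lambda>j. case_sum Y E j \<omega>) (Inl ` {..<k} \<union> Inr ` {..<k}) \<in> W} * (1 - exp (- lam))"
proof -
  let ?I = "Inl ` {..<k} \<union> Inr ` {..<k} :: (nat + nat) set"
  have iv: "indep_var (PiM ?I (\<lambda>_. borel)) (\<lambda>\<omega>. restrict (\<lambda>j. case_sum Y E j \<omega>) ?I)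
     (PiM {Inr k} (\<lambda>_. borel)) (\<lambda>\<omega>. restrict (\<lambda>j. case_sum Y E j \<omega>) {Inr k})"
    by (rule indep_var_restrict[OF indep]) auto
  let ?W2 = "{g\<in>space (PiM {Inr k} (\<lambda>_. borel)). g (Inr k) \<le> (1::real)}"
  have W2: "?W2 \<in> sets (PiM {Inr k} (\<lambda>_. borel))" by measurable
  have "prob ((\<lambda>x. (restrict (\<lambda>j. case_sum Y E j x) ?I, restrict (\<lambda>j. case_sum Y E j x) {Inr k})) -` (W \<times> ?W2) \<inter> space M) =
    prob ((\<lambda>\<omega>. restrict (\<lambda>j. case_sum Y E j \<omega>) ?I) -` W \<inter> space M) * prob ((\<lambda>\<omega>. restrict (\<lambda>j. case_sum Y E j \<omega>) {Inr k}) -` ?W2 \<inter> space M)"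
    by (rule indep_varD[OF iv W W2])
  moreover have "(\<lambda>x. (restrict (\<lambda>j. case_sum Y E j x) ?I, restrict (\<lambda>j. case_sum Y E j x) {Inr k})) -` (W \<times> ?W2) \<inter> space M =
     {\<omega>\<in>space M. restrict (\<lambda>j. case_sum Y E j \<omega>) ?I \<in> W \<and> E k \<omega> \<le> 1}" by (auto simp: space_PiM)
  moreover have "(\<lambda>\<omega>. restrict (\<lambda>j. case_sum Y E j \<omega>) ?I) -` W \<inter> space M =
     {\<omega>\<in>space M. restrict (\<lambda>j. case_sum Y E j \<omega>) ?I \<in> W}" by auto
  moreover have "(\<lambda>\<omega>. restrict (\<lambda>j. case_sum Y E j \<omega>) {Inr k}) -` ?W2 \<inter> space M = {\<omega>\<in>space M. E k \<omega> \<le> 1}" by (auto simp: space_PiM)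
  ultimately show ?thesis using probE_le1[of k] by simp
qed

definition fl :: "nat \<Rightarrow> nat + nat \<Rightarrow> real \<Rightarrow> real" where
  "fl k j x = (case j of Inl i \<Rightarrow> if k \<le> i then - x else x | Inr _ \<Rightarrow> x)"

lemma distr_negY: "distr M borel (\<lambda>\<omega>. - Y i \<omega>) = distr M borel (Y i)"
proof -
  have "distr M borel (\<lambda>\<omega>. - Y i \<omega>) = distr (distr M borel (Y i)) borel uminus"
    by (subst distr_distr) (auto simp: comp_def)
  also have "\<dots> = distr (distr M borel (Y 0)) borel uminus" by (simp only: ident[of i])
  also have "\<dots> = distr M borel (\<lambda>\<omega>. - Y 0 \<omega>)"
    by (subst distr_distr) (auto simp: comp_def)
  also have "\<dots> = distr M borel (Y i)" using symm ident[of i] by (simp only:)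
  finally show ?thesis .
qed

lemma reflection:
  assumes A: "A \<in> sets (PiM (UNIV :: (nat+nat) set) (\<lambda>_. borel))"
  shows "prob {\<omega>\<in>space M. (\<lambda>j. case_sum Y E j \<omega>) \<in> A} =
         prob {\<omega>\<in>space M. (\<lambda>j. fl k j (case_sum Y E j \<omega>)) \<in> A}"
proof -
  let ?PS = "PiM (UNIV :: (nat+nat) set) (\<lambda>_. borel)"
  let ?Z = "\<lambda>j \<omega>. fl k j (case_sum Y E j \<omega>)"
  have flm[measurable]: "fl k j \<in> borel_measurable borel" for j
    unfolding fl_def by (cases j) auto
  have rvX: "random_variable borel (case_sum Y E j)" for j by (cases j) auto
  have rvZ: "random_variable borel (?Z j)" for j using rvX[of j] by measurable
  have indZ: "indep_vars (\<lambda>_. borel) ?Z UNIV"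
    by (rule indep_vars_compose2[OF indep]) auto
  have marg: "distr M borel (?Z j) = distr M borel (case_sum Y E j)" for j
  proof (cases j)
    case (Inl i) then show ?thesis
      using distr_negY[of i] by (cases "k \<le> i") (auto simp: fl_def)
  next
    case (Inr i) then show ?thesis by (simp add: fl_def)
  qed
  have "distr M ?PS (\<lambda>\<omega>. \<lambda>j\<in>UNIV. ?Z j \<omega>) = (\<Pi>\<^sub>M j\<in>UNIV. distr M borel (?Z j))"
    using indep_vars_iff_distr_eq_PiM[where I=UNIV and M'="\<lambda>_. borel" and X="?Z"] rvZ indZ by simp
  also have "\<dots> = (\<Pi>\<^sub>M j\<in>UNIV. distr M borel (case_sum Y E j))"
    by (rule PiM_cong) (auto simp: marg)
  also have "\<dots> = distr M ?PS (\<lambda>\<omega>. \<lambda>j\<in>UNIV. case_sum Y E j \<omega>)"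
    using indep_vars_iff_distr_eq_PiM[where I=UNIV and M'="\<lambda>_. borel" and X="case_sum Y E"] rvX indep by simp
  finally have deq: "distr M ?PS (\<lambda>\<omega>. \<lambda>j\<in>UNIV. ?Z j \<omega>) = distr M ?PS (\<lambda>\<omega>. \<lambda>j\<in>UNIV. case_sum Y E j \<omega>)" .
  have m1: "(\<lambda>\<omega>. \<lambda>j\<in>UNIV. ?Z j \<omega>) \<in> measurable M ?PS"
    by (rule measurable_restrict) (use rvZ in auto)
  have m2: "(\<lambda>\<omega>. \<lambda>j\<in>UNIV. case_sum Y E j \<omega>) \<in> measurable M ?PS"
    by (rule measurable_restrict) (use rvX in auto)
  have "prob {\<omega>\<in>space M. (\<lambda>j. case_sum Y E j \<omega>) \<in> A} = measure (distr M ?PS (\<lambda>\<omega>. \<lambda>j\<in>UNIV. case_sum Y E j \<omega>)) A"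
    by (subst measure_distr[OF m2 A]) (auto simp: restrict_UNIV intro!: arg_cong[where f=prob])
  also have "\<dots> = measure (distr M ?PS (\<lambda>\<omega>. \<lambda>j\<in>UNIV. ?Z j \<omega>)) A" by (simp add: deq)
  also have "\<dots> = prob {\<omega>\<in>space M. (\<lambda>j. ?Z j \<omega>) \<in> A}"
    by (subst measure_distr[OF m1 A]) (auto simp: restrict_UNIV intro!: arg_cong[where f=prob])
  finally show ?thesis .
qed


lemma L2:
  fixes k :: nat and q :: "(nat + nat \<Rightarrow> real) \<Rightarrow> bool" and Q :: "'a \<Rightarrow> bool"
  assumes q[measurable]: "Measurable.pred (PiM (Inl ` {..<k} \<union> Inr ` {..<k}) (\<lambda>_. borel)) q"
    and qQ: "\<And>\<omega>. \<omega> \<in> space M \<Longrightarrow> q (restrict (\<lambda>j. case_sum Y E j \<omega>) (Inl ` {..<k} \<union> Inr ` {..<k})) = Q \<omega>"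
  shows "prob {\<omega>\<in>space M. Q \<omega> \<and> E k \<omega> \<le> 1} = prob {\<omega>\<in>space M. Q \<omega>} * (1 - exp (- lam))"
proof -
  let ?I = "Inl ` {..<k} \<union> Inr ` {..<k} :: (nat + nat) set"
  let ?W = "{g\<in>space (PiM ?I (\<lambda>_. borel)). q g}"
  have W: "?W \<in> sets (PiM ?I (\<lambda>_. borel))" by measurable
  have mem: "restrict (\<lambda>j. case_sum Y E j \<omega>) ?I \<in> ?W \<longleftrightarrow> Q \<omega>" if "\<omega> \<in> space M" for \<omega>
    using qQ[OF that] by (auto simp: space_PiM)
  have e1: "{\<omega>\<in>space M. restrict (\<lambda>j. case_sum Y E j \<omega>) ?I \<in> ?W \<and> E k \<omega> \<le> 1} = {\<omega>\<in>space M. Q \<omega> \<and> E k \<omega> \<le> 1}"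
    using mem by blast
  have e2: "{\<omega>\<in>space M. restrict (\<lambda>j. case_sum Y E j \<omega>) ?I \<in> ?W} = {\<omega>\<in>space M. Q \<omega>}"
    using mem by blast
  show ?thesis using L[OF W] unfolding e1 e2 .
qed

abbreviation "SS n \<omega> \<equiv> (\<Sum>i<n. Y i \<omega>)"
abbreviation "Acc n \<omega> \<equiv> (\<Sum>i<n. E i \<omega>)"
abbreviation "NN \<omega> \<equiv> poisson_count E 1 \<omega>"
abbreviation "RR k \<omega> \<equiv> (\<Sum>i\<in>{k..<NN \<omega>}. Y i \<omega>)"
abbreviation "Bp u k \<omega> \<equiv> u < SS k \<omega> \<and> (\<forall>j<k. SS j \<omega> \<le> u)"
abbreviation "H1 \<equiv> {\<omega>\<in>space M. \<exists>i. E i \<omega> \<le> 0}"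
abbreviation "DD \<equiv> {\<omega>\<in>space M. \<forall>n. Acc n \<omega> \<le> 1}"

lemma NN_meas[measurable]: "NN \<in> measurable M (count_space UNIV)"
  by (rule measurable_poisson_count) simp

lemma RR_meas[measurable]: "(\<lambda>\<omega>. RR k \<omega>) \<in> borel_measurable M"
  by (rule measurable_compose_countable[where f="\<lambda>n \<omega>. \<Sum>i\<in>{k..<n}. Y i \<omega>" and g=NN]) measurable

lemma CP_meas[measurable]: "(\<lambda>\<omega>. compound_poisson Y E t \<omega>) \<in> borel_measurable M"
  unfolding compound_poisson_def
  by (rule measurable_compose_countable[where f="\<lambda>n \<omega>. \<Sum>i<n. Y i \<omega>" and g="poisson_count E t"]) measurable

lemma H1_null: "prob H1 = 0"
proof -
  have "H1 = (\<Union>i. {\<omega>\<in>space M. E i \<omega> \<le> 0})" by auto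
  moreover have "emeasure M (\<Union>i. {\<omega>\<in>space M. E i \<omega> \<le> 0}) = 0"
    by (rule emeasure_UN_eq_0) (auto simp: emeasure_eq_measure probE_le0)
  ultimately show ?thesis by (simp add: measure_def)
qed

lemma c_bounds: "0 < exp (- lam)" "exp (- lam) < 1"
  using lam by auto

lemma rsum_Inr: "n \<le> k \<Longrightarrow> (\<Sum>x<n. restrict (\<lambda>j. case_sum Y E j \<omega>) (Inl ` {..<k} \<union> Inr ` {..<k}) (Inr x)) = Acc n \<omega>"
  by (intro sum.cong) auto

lemma rsum_Inl: "n \<le> k \<Longrightarrow> (\<Sum>x<n. restrict (\<lambda>j. case_sum Y E j \<omega>) (Inl ` {..<k} \<union> Inr ` {..<k}) (Inl x)) = SS n \<omega>"
  by (intro sum.cong) auto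

lemma Acc_decay: "prob {\<omega>\<in>space M. Acc n \<omega> \<le> 1} \<le> (1 - exp (- lam)) ^ n"
proof (induction n)
  case 0 show ?case by simp
next
  case (Suc n)
  have "prob {\<omega>\<in>space M. Acc (Suc n) \<omega> \<le> 1} \<le> prob {\<omega>\<in>space M. Acc n \<omega> \<le> 1 \<and> E n \<omega> \<le> 1}"
  proof (rule prob_le_null[where Z=H1])
    show "{\<omega>\<in>space M. Acc (Suc n) \<omega> \<le> 1} \<subseteq> {\<omega>\<in>space M. Acc n \<omega> \<le> 1 \<and> E n \<omega> \<le> 1} \<union> H1"
    proof
      fix \<omega> assume w: "\<omega> \<in> {\<omega>\<in>space M. Acc (Suc n) \<omega> \<le> 1}"
      show "\<omega> \<in> {\<omega>\<in>space M. Acc n \<omega> \<le> 1 \<and> E n \<omega> \<le> 1} \<union> H1"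
      proof (cases "\<omega> \<in> H1")
        case False
        then have pos: "\<And>i. 0 \<le> E i \<omega>" using w by (auto simp: not_le intro: less_imp_le)
        have "0 \<le> Acc n \<omega>" using pos by (intro sum_nonneg) auto
        then show ?thesis using w pos[of n] by auto
      qed auto
    qed
  qed (auto simp: H1_null)
  also have "\<dots> = prob {\<omega>\<in>space M. Acc n \<omega> \<le> 1} * (1 - exp (- lam))"
  proof (rule L2[where q="\<lambda>g. (\<Sum>i<n. g (Inr i)) \<le> 1"])
    show "Measurable.pred (PiM (Inl ` {..<n} \<union> Inr ` {..<n}) (\<lambda>_. borel)) (\<lambda>g. (\<Sum>i<n. g (Inr i)) \<le> (1::real))"
      by measurable
    fix \<omega> assume "\<omega> \<in> space M"
    show "(\<Sum>i<n. restrict (\<lambda>j. case_sum Y E j \<omega>) (Inl ` {..<n} \<union> Inr ` {..<n}) (Inr i)) \<le> 1 \<longleftrightarrow> Acc n \<omega> \<le> 1"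
      by (simp add: rsum_Inr)
  qed
  also have "\<dots> \<le> (1 - exp (- lam)) ^ n * (1 - exp (- lam))"
    using Suc.IH c_bounds by (intro mult_right_mono) auto
  finally show ?case by (simp add: mult.commute)
qed

lemma DD_null: "prob DD = 0"
proof -
  have le: "prob DD \<le> (1 - exp (- lam)) ^ n" for n
  proof -
    have "prob DD \<le> prob {\<omega>\<in>space M. Acc n \<omega> \<le> 1}" by (intro finite_measure_mono) auto
    then show ?thesis using Acc_decay[of n] by linarith
  qed
  have "(\<lambda>n. (1 - exp (- lam)) ^ n) \<longlonglongrightarrow> 0"
    using c_bounds by (intro LIMSEQ_power_zero) auto
  then have "prob DD \<le> 0" using le by (intro LIMSEQ_le_const) auto
  then show ?thesis using measure_nonneg[of M DD] by linarith
qed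

lemma Nk:
  assumes w: "\<omega> \<in> space M" "\<omega> \<notin> H1" "\<omega> \<notin> DD"
  shows "k \<le> NN \<omega> \<longleftrightarrow> Acc k \<omega> \<le> 1"
    and "t \<le> 1 \<Longrightarrow> poisson_count E t \<omega> \<le> NN \<omega>"
proof -
  have nn: "\<And>i. 0 \<le> E i \<omega>" using w by (auto simp: not_le intro: less_imp_le)
  have mono: "Acc m \<omega> \<le> Acc n \<omega>" if "m \<le> n" for m n
    using nn that by (intro sum_mono2) auto
  obtain n0 where n0: "Acc n0 \<omega> > 1" using w by (auto simp: not_le)
  let ?P = "{n. 1 \<le> n \<and> Acc n \<omega> \<le> 1}"
  have "?P \<subseteq> {..<n0}"
  proof
    fix n assume "n \<in> ?P"
    then show "n \<in> {..<n0}" using mono[of n0 n] n0 by (cases "n0 \<le> n") auto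
  qed
  then have finP: "finite ?P" using finite_subset by blast
  have NNc: "NN \<omega> = card ?P" by (simp add: poisson_count_def)
  show "k \<le> NN \<omega> \<longleftrightarrow> Acc k \<omega> \<le> 1"
  proof
    assume k: "k \<le> NN \<omega>"
    show "Acc k \<omega> \<le> 1"
    proof (rule ccontr)
      assume a: "\<not> Acc k \<omega> \<le> 1"
      have "?P \<subseteq> {1..<k}"
      proof
        fix n assume "n \<in> ?P"
        then show "n \<in> {1..<k}" using mono[of k n] a by (cases "k \<le> n") auto
      qed
      then have "card ?P \<le> card {1..<k}" by (intro card_mono) auto
      moreover have "k \<noteq> 0"
      proof
        assume "k = 0" then show False using a by simp
      qed
      ultimately show False using k NNc by simp
    qed
  next
    assume a: "Acc k \<omega> \<le> 1"
    have "{1..k} \<subseteq> ?P"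
    proof
      fix n assume "n \<in> {1..k}" then show "n \<in> ?P" using mono[of n k] a by auto
    qed
    then have "card {1..k} \<le> card ?P" using finP by (intro card_mono) auto
    then show "k \<le> NN \<omega>" using NNc by simp
  qed
  assume t: "t \<le> 1"
  have sub: "{n. 1 \<le> n \<and> Acc n \<omega> \<le> t} \<subseteq> ?P" using t by auto
  show "poisson_count E t \<omega> \<le> NN \<omega>" unfolding NNc
    unfolding poisson_count_def by (rule card_mono[OF finP sub])
qed

lemma HH_sets: "H1 \<union> DD \<in> events" by measurable

lemma HH_null: "prob (H1 \<union> DD) = 0"
proof -
  have "prob (H1 \<union> DD) \<le> prob H1 + prob DD" by (intro measure_Un_le) measurable
  then show ?thesis using H1_null DD_null measure_nonneg[of M "H1 \<union> DD"] by linarith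
qed

lemma key2: "exp (- lam) * prob {\<omega>\<in>space M. Bp u k \<omega> \<and> k \<le> NN \<omega>} \<le> prob {\<omega>\<in>space M. Bp u k \<omega> \<and> NN \<omega> = k}"
proof -
  let ?A = "{\<omega>\<in>space M. Bp u k \<omega> \<and> Acc k \<omega> \<le> 1}"
  let ?C = "{\<omega>\<in>space M. Acc (Suc k) \<omega> \<le> 1}"
  let ?B = "{\<omega>\<in>space M. (Bp u k \<omega> \<and> Acc k \<omega> \<le> 1) \<and> E k \<omega> \<le> 1}"
  have As: "?A \<in> events" and Cs: "?C \<in> events" by measurable
  have e1: "prob {\<omega>\<in>space M. Bp u k \<omega> \<and> k \<le> NN \<omega>} = prob ?A"
  proof (rule prob_eq_null[OF _ As HH_sets HH_null])
    show "{\<omega>\<in>space M. Bp u k \<omega> \<and> k \<le> NN \<omega>} \<in> events" by measurable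
    fix \<omega> assume "\<omega> \<in> space M" "\<omega> \<notin> H1 \<union> DD"
    then show "\<omega> \<in> {\<omega>\<in>space M. Bp u k \<omega> \<and> k \<le> NN \<omega>} \<longleftrightarrow> \<omega> \<in> ?A"
      using Nk(1)[of \<omega> k] by auto
  qed
  have e2: "prob {\<omega>\<in>space M. Bp u k \<omega> \<and> NN \<omega> = k} = prob (?A - ?C)"
  proof (rule prob_eq_null[OF _ _ HH_sets HH_null])
    show "{\<omega>\<in>space M. Bp u k \<omega> \<and> NN \<omega> = k} \<in> events" by measurable
    show "?A - ?C \<in> events" using As Cs by auto
    fix \<omega> assume w: "\<omega> \<in> space M" "\<omega> \<notin> H1 \<union> DD"
    have "NN \<omega> = k \<longleftrightarrow> k \<le> NN \<omega> \<and> \<not> Suc k \<le> NN \<omega>" by auto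
    then show "\<omega> \<in> {\<omega>\<in>space M. Bp u k \<omega> \<and> NN \<omega> = k} \<longleftrightarrow> \<omega> \<in> ?A - ?C"
      using Nk(1)[of \<omega> k] Nk(1)[of \<omega> "Suc k"] w by auto
  qed
  have e3: "prob (?A - ?C) = prob ?A - prob (?A \<inter> ?C)"
    by (rule finite_measure_Diff'[OF As Cs])
  have e4: "prob (?A \<inter> ?C) \<le> prob ?B"
  proof (rule prob_le_null[where Z=H1])
    show "?A \<inter> ?C \<subseteq> ?B \<union> H1"
    proof
      fix \<omega> assume w: "\<omega> \<in> ?A \<inter> ?C"
      show "\<omega> \<in> ?B \<union> H1"
      proof (cases "\<omega> \<in> H1")
        case False
        then have pos: "\<And>i. 0 \<le> E i \<omega>" using w by (auto simp: not_le intro: less_imp_le)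
        have "0 \<le> Acc k \<omega>" using pos by (intro sum_nonneg) auto
        then show ?thesis using w by auto
      qed auto
    qed
  qed (auto simp: H1_null)
  have e5: "prob ?B = prob ?A * (1 - exp (- lam))"
  proof (rule L2[where q="\<lambda>g. (u < (\<Sum>i<k. g (Inl i)) \<and> (\<forall>j<k. (\<Sum>i<j. g (Inl i)) \<le> u)) \<and> (\<Sum>i<k. g (Inr i)) \<le> 1"])
    show "Measurable.pred (PiM (Inl ` {..<k} \<union> Inr ` {..<k}) (\<lambda>_. borel))
      (\<lambda>g. (u < (\<Sum>i<k. g (Inl i)) \<and> (\<forall>j<k. (\<Sum>i<j. g (Inl i)) \<le> u)) \<and> (\<Sum>i<k. g (Inr i)) \<le> (1::real))"
      by measurable
    fix \<omega> assume "\<omega> \<in> space M"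
    show "((u < (\<Sum>i<k. restrict (\<lambda>j. case_sum Y E j \<omega>) (Inl ` {..<k} \<union> Inr ` {..<k}) (Inl i)) \<and>
       (\<forall>j<k. (\<Sum>i<j. restrict (\<lambda>j. case_sum Y E j \<omega>) (Inl ` {..<k} \<union> Inr ` {..<k}) (Inl i)) \<le> u)) \<and>
       (\<Sum>i<k. restrict (\<lambda>j. case_sum Y E j \<omega>) (Inl ` {..<k} \<union> Inr ` {..<k}) (Inr i)) \<le> 1) =
       (Bp u k \<omega> \<and> Acc k \<omega> \<le> 1)"
      by (simp add: rsum_Inl rsum_Inr)
  qed
  have "0 \<le> prob ?A" by simp
  then show ?thesis using e1 e2 e3 e4 e5 by (simp add: algebra_simps)
qed

lemma key1: "prob {\<omega>\<in>space M. Bp u k \<omega> \<and> RR k \<omega> < 0} = prob {\<omega>\<in>space M. Bp u k \<omega> \<and> 0 < RR k \<omega>}"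
proof -
  let ?PS = "PiM (UNIV::(nat+nat) set) (\<lambda>_. borel::real measure)"
  let ?NP = "poisson_count (\<lambda>i (f::nat+nat\<Rightarrow>real). f (Inr i)) 1"
  have NPm[measurable]: "?NP \<in> measurable ?PS (count_space UNIV)"
    by (rule measurable_poisson_count) measurable
  have RPm[measurable]: "(\<lambda>f. \<Sum>i\<in>{k..<?NP f}. f (Inl i)) \<in> borel_measurable ?PS"
    by (rule measurable_compose_countable[where f="\<lambda>n f. \<Sum>i\<in>{k..<n}. f (Inl i)" and g="?NP"]) measurable
  let ?A = "{f\<in>space ?PS. (u < (\<Sum>i<k. f (Inl i)) \<and> (\<forall>j<k. (\<Sum>i<j. f (Inl i)) \<le> u)) \<and> (\<Sum>i\<in>{k..<?NP f}. f (Inl i)) < 0}"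
  have As: "?A \<in> sets ?PS" by measurable
  have NPX: "?NP (\<lambda>j. case_sum Y E j \<omega>) = NN \<omega>" for \<omega> by (simp add: poisson_count_def)
  have NPZ: "?NP (\<lambda>j. fl k j (case_sum Y E j \<omega>)) = NN \<omega>" for \<omega> by (simp add: poisson_count_def fl_def)
  have "{\<omega>\<in>space M. (\<lambda>j. case_sum Y E j \<omega>) \<in> ?A} = {\<omega>\<in>space M. Bp u k \<omega> \<and> RR k \<omega> < 0}"
    by (auto simp: space_PiM NPX)
  moreover have "{\<omega>\<in>space M. (\<lambda>j. fl k j (case_sum Y E j \<omega>)) \<in> ?A} = {\<omega>\<in>space M. Bp u k \<omega> \<and> 0 < RR k \<omega>}"
  proof -
    have s1: "(\<Sum>i<j. fl k (Inl i) (Y i \<omega>)) = SS j \<omega>" if "j \<le> k" for j \<omega>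
      using that by (intro sum.cong) (auto simp: fl_def)
    have s2: "(\<Sum>i\<in>{k..<n}. fl k (Inl i) (Y i \<omega>)) = - (\<Sum>i\<in>{k..<n}. Y i \<omega>)" for n \<omega>
    proof -
      have "(\<Sum>i\<in>{k..<n}. fl k (Inl i) (Y i \<omega>)) = (\<Sum>i\<in>{k..<n}. - Y i \<omega>)"
        by (intro sum.cong) (auto simp: fl_def)
      then show ?thesis by (simp add: sum_negf)
    qed
    show ?thesis by (auto simp: space_PiM NPZ s1 s2)
  qed
  ultimately show ?thesis using reflection[OF As, of k] by simp
qed

lemma RR_nz: "RR k \<omega> \<noteq> 0 \<Longrightarrow> k \<le> NN \<omega>"
  by (cases "k \<le> NN \<omega>") auto

lemma RR_neg: "RR k \<omega> < 0 \<Longrightarrow> k \<le> NN \<omega>"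
  using RR_nz[where k=k and \<omega>=\<omega>] by linarith

lemma RR_pos: "0 < RR k \<omega> \<Longrightarrow> k \<le> NN \<omega>"
  using RR_nz[where k=k and \<omega>=\<omega>] by linarith

lemma perk: "(1 + exp (- lam)) * prob {\<omega>\<in>space M. Bp u k \<omega> \<and> k \<le> NN \<omega>}
   \<le> 2 * prob {\<omega>\<in>space M. Bp u k \<omega> \<and> k \<le> NN \<omega> \<and> \<not> RR k \<omega> < 0}"
proof -
  let ?num = "{\<omega>\<in>space M. Bp u k \<omega> \<and> k \<le> NN \<omega>}"
  let ?den = "{\<omega>\<in>space M. Bp u k \<omega> \<and> k \<le> NN \<omega> \<and> \<not> RR k \<omega> < 0}"
  let ?neg = "{\<omega>\<in>space M. Bp u k \<omega> \<and> RR k \<omega> < 0}"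
  let ?pos = "{\<omega>\<in>space M. Bp u k \<omega> \<and> 0 < RR k \<omega>}"
  let ?z = "{\<omega>\<in>space M. Bp u k \<omega> \<and> NN \<omega> = k}"
  have s: "?num \<in> events" "?den \<in> events" "?neg \<in> events" "?pos \<in> events" "?z \<in> events"
    by measurable
  have "?num = ?den \<union> ?neg" by (auto intro: RR_neg)
  then have n1: "prob ?num = prob ?den + prob ?neg"
    using finite_measure_Union[OF s(2,3)] by auto
  have "prob (?z \<union> ?pos) = prob ?z + prob ?pos"
    by (rule finite_measure_Union[OF s(5,4)]) auto
  moreover have "prob (?z \<union> ?pos) \<le> prob ?den"
  proof (rule finite_measure_mono[OF _ s(2)])
    show "?z \<union> ?pos \<subseteq> ?den" by (auto intro: RR_pos)
  qed
  ultimately have n2: "prob ?z + prob ?pos \<le> prob ?den" by simp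
  have d: "(1 + exp (- lam)) * prob ?num = prob ?num + exp (- lam) * prob ?num" by (simp add: distrib_right)
  show ?thesis using d n1 n2 key1[of u k] key2[of u k] by linarith
qed

lemma sum_split_at: "(k::nat) \<le> n \<Longrightarrow> (\<Sum>i<n. f i) = (\<Sum>i<k. f i) + (\<Sum>i\<in>{k..<n}. (f i :: real))"
  using sum.atLeastLessThan_concat[of 0 k n f] by (simp add: atLeast0LessThan)

lemma den_sub: "{\<omega>\<in>space M. Bp u k \<omega> \<and> k \<le> NN \<omega> \<and> \<not> RR k \<omega> < 0} \<subseteq> {\<omega>\<in>space M. u < compound_poisson Y E 1 \<omega>}"
proof
  fix \<omega> assume w: "\<omega> \<in> {\<omega>\<in>space M. Bp u k \<omega> \<and> k \<le> NN \<omega> \<and> \<not> RR k \<omega> < 0}"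
  then have "compound_poisson Y E 1 \<omega> = SS k \<omega> + RR k \<omega>"
    unfolding compound_poisson_def by (intro sum_split_at) auto
  then show "\<omega> \<in> {\<omega>\<in>space M. u < compound_poisson Y E 1 \<omega>}" using w by auto
qed

lemma num_sub: "{\<omega>\<in>space M. u < (SUP t\<in>{0..1}. compound_poisson Y E t \<omega>)}
   \<subseteq> (\<Union>k. {\<omega>\<in>space M. Bp u k \<omega> \<and> k \<le> NN \<omega>}) \<union> (H1 \<union> DD)"
proof
  fix \<omega> assume w: "\<omega> \<in> {\<omega>\<in>space M. u < (SUP t\<in>{0..1}. compound_poisson Y E t \<omega>)}"
  show "\<omega> \<in> (\<Union>k. {\<omega>\<in>space M. Bp u k \<omega> \<and> k \<le> NN \<omega>}) \<union> (H1 \<union> DD)"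
  proof (cases "\<omega> \<in> H1 \<union> DD")
    case False
    have ws: "\<omega> \<in> space M" "\<omega> \<notin> H1" "\<omega> \<notin> DD" using w False by auto
    have pc: "poisson_count E t \<omega> \<le> NN \<omega>" if "t \<in> {0..1}" for t
      using Nk(2)[OF ws] that by auto
    have "(\<lambda>t. compound_poisson Y E t \<omega>) ` {0..1} \<subseteq> (\<lambda>n. SS n \<omega>) ` {..NN \<omega>}"
      using pc by (auto simp: compound_poisson_def)
    then have bdd: "bdd_above ((\<lambda>t. compound_poisson Y E t \<omega>) ` {0..1})"
      by (meson bdd_above_mono finite_atMost finite_imageI bdd_above_finite)
    obtain t where t: "t \<in> {0..1}" "u < compound_poisson Y E t \<omega>"
      using w less_cSUP_iff[of "{0..1::real}" "\<lambda>t. compound_poisson Y E t \<omega>" u, OF _ bdd] by auto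
    let ?n = "poisson_count E t \<omega>"
    have un: "u < SS ?n \<omega>" using t(2) by (simp add: compound_poisson_def)
    define k where "k = (LEAST j. u < SS j \<omega>)"
    have k1: "u < SS k \<omega>" unfolding k_def by (rule LeastI[where P="\<lambda>j. u < SS j \<omega>", OF un])
    have k2: "k \<le> ?n" unfolding k_def by (rule Least_le[where P="\<lambda>j. u < SS j \<omega>", OF un])
    have k3: "\<forall>j<k. SS j \<omega> \<le> u" unfolding k_def using not_less_Least by force
    have "k \<le> NN \<omega>" using k2 pc[OF t(1)] by linarith
    then show ?thesis using k1 k3 ws by auto
  qed auto
qed

lemma main_bound:
  "prob {\<omega>\<in>space M. u < (SUP t\<in>{0..1}. compound_poisson Y E t \<omega>)}
     \<le> (2 / (1 + exp (- lam))) * prob {\<omega>\<in>space M. u < compound_poisson Y E 1 \<omega>}"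
proof -
  let ?K = "2 / (1 + exp (- lam))"
  let ?num = "\<lambda>k. {\<omega>\<in>space M. Bp u k \<omega> \<and> k \<le> NN \<omega>}"
  let ?den = "\<lambda>k. {\<omega>\<in>space M. Bp u k \<omega> \<and> k \<le> NN \<omega> \<and> \<not> RR k \<omega> < 0}"
  have cpos: "0 < 1 + exp (- lam)" using c_bounds(1) by linarith
  have nk: "prob (?num k) \<le> ?K * prob (?den k)" for k
    using perk[of u k] cpos by (simp add: field_simps)
  have rn: "range ?num \<subseteq> events" and rd: "range ?den \<subseteq> events" by auto
  have disj: "disjoint_family ?den"
    unfolding disjoint_family_on_def
  proof (intro ballI impI)
    fix m n :: nat assume "m \<noteq> n"
    then consider "m < n" | "n < m" by linarith
    then show "?den m \<inter> ?den n = {}" by cases force+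
  qed
  have sd: "(\<lambda>k. prob (?den k)) sums prob (\<Union>k. ?den k)"
    by (rule finite_measure_UNION[OF rd disj])
  have sK: "(\<lambda>k. ?K * prob (?den k)) sums (?K * prob (\<Union>k. ?den k))"
    by (rule sums_mult[OF sd])
  have sumn: "summable (\<lambda>k. prob (?num k))"
    by (rule summable_comparison_test[OF _ sums_summable[OF sK]]) (use nk in auto)
  have "prob {\<omega>\<in>space M. u < (SUP t\<in>{0..1}. compound_poisson Y E t \<omega>)} \<le> prob (\<Union>k. ?num k)"
    by (rule prob_le_null[OF num_sub _ HH_sets HH_null]) (use rn in auto)
  also have "\<dots> \<le> (\<Sum>k. prob (?num k))"
    by (rule finite_measure_subadditive_countably[OF rn sumn])
  also have "\<dots> \<le> (\<Sum>k. ?K * prob (?den k))"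
    by (rule suminf_le[OF nk sumn sums_summable[OF sK]])
  also have "\<dots> = ?K * prob (\<Union>k. ?den k)" using sK by (rule sums_unique[symmetric])
  also have "\<dots> \<le> ?K * prob {\<omega>\<in>space M. u < compound_poisson Y E 1 \<omega>}"
  proof (rule mult_left_mono)
    show "prob (\<Union>k. ?den k) \<le> prob {\<omega>\<in>space M. u < compound_poisson Y E 1 \<omega>}"
      using den_sub by (intro finite_measure_mono) (auto, measurable)
  qed (use cpos in auto)
  finally show ?thesis .
qed

end

theorem mainTheorem17:
  fixes M :: "'a measure" and Y E :: "nat \<Rightarrow> 'a \<Rightarrow> real" and lam :: real
  assumes "prob_space M"
    and "lam > 0"
    and indep: "prob_space.indep_vars M (\<lambda>_. borel) (case_sum Y E) UNIV"
    and expo: "\<And>i. distributed M lborel (E i) (exponential_density lam)"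
    and rv: "\<And>k. Y k \<in> borel_measurable M"
    and ident: "\<And>k. distr M borel (Y k) = distr M borel (Y 0)"
    and symm: "distr M borel (\<lambda>\<omega>. - Y 0 \<omega>) = distr M borel (Y 0)"
    and nonzero: "\<not> (AE \<omega> in M. Y 0 \<omega> = 0)"
  shows "Limsup at_top (\<lambda>u::real. ereal
           (measure M {\<omega> \<in> space M. (SUP t\<in>{0..1}. compound_poisson Y E t \<omega>) > u}
            / measure M {\<omega> \<in> space M. compound_poisson Y E 1 \<omega> > u})) < 2"
proof -
  have cp: "cp_setting M Y E lam"
    unfolding cp_setting_def cp_setting_axioms_def using assms by auto
  interpret cp_setting M Y E lam by (rule cp)
  let ?K = "2 / (1 + exp (- lam))"
  have cpos: "0 < 1 + exp (- lam)" using c_bounds(1) by linarith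
  have bound: "measure M {\<omega> \<in> space M. (SUP t\<in>{0..1}. compound_poisson Y E t \<omega>) > u}
            / measure M {\<omega> \<in> space M. compound_poisson Y E 1 \<omega> > u} \<le> ?K" for u :: real
  proof (cases "measure M {\<omega> \<in> space M. compound_poisson Y E 1 \<omega> > u} = 0")
    case True then show ?thesis using cpos by simp
  next
    case False
    then have "0 < measure M {\<omega> \<in> space M. compound_poisson Y E 1 \<omega> > u}"
      using measure_nonneg[of M "{\<omega> \<in> space M. compound_poisson Y E 1 \<omega> > u}"] by linarith
    then show ?thesis using main_bound[of u] by (simp add: divide_le_eq)
  qed
  have "Limsup at_top (\<lambda>u::real. ereal
           (measure M {\<omega> \<in> space M. (SUP t\<in>{0..1}. compound_poisson Y E t \<omega>) > u}
            / measure M {\<omega> \<in> space M. compound_poisson Y E 1 \<omega> > u})) \<le> ereal ?K"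
    by (intro Limsup_bounded always_eventually allI) (simp add: bound)
  also have "ereal ?K < 2"
  proof -
    have "?K < 2" using c_bounds(1) cpos by (simp add: divide_less_eq)
    then show ?thesis by simp
  qed
  finally show ?thesis .
qed

end
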